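(* Let $\mathcal H\subseteq\mathcal S_+^d$ be a well-structured preconditioner set. Then for every $y\in\mathbb R^d$, $$\|y\|_{\mathcal H,*}=\inf_{H\in\mathcal H\cap\mathcal S^d_{++},\ \operatorname{Tr}(H)\le 1}\|y\|_{H,*}=\inf_{H\in\mathcal H\cap\mathcal S^d_{++},\ \operatorname{Tr}(H)\le 1}\|y\|_{H^{-1}},$$ where $\|\cdot\|_{H,*}$ denotes the dual norm of $\|\cdot\|_H$.
   Context: $\mathcal S^d_+$ (resp. $\mathcal S^d_{++}$) denotes the set of real symmetric positive semidefinite (resp. positive definite) $d\times d$ matrices. A set $\mathcal H\subseteq\mathcal S_+^d$ is a well-structured preconditioner set if $\mathcal H=\mathcal S_+^d\cap\mathcal K$ for some set $\mathcal K$ of real $d\times d$ matrices that is closed under scalar multiplication, matrix addition and matrix multiplication and contains the identity $I_d$. For $H\in\mathcal S_+^d$, $\|x\|_H=\sqrt{x^\top Hx}$. The $\mathcal H$-norm is $\|x\|_{\mathcal H}:=\sup_{H\in\mathcal H,\operatorname{Tr}(H)\le 1}\|x\|_H$, and $\|y\|_{\mathcal H,*}:=\sup_{\|x\|_{\mathcal H}\le 1}\langle x,y\rangle$ is its dual norm. *)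

theory Defs
  imports "HOL-Analysis.Analysis"
begin

definition psd :: "real^'n^'n \<Rightarrow> bool" where
  "psd A \<longleftrightarrow> transpose A = A \<and> (\<forall>x. 0 \<le> x \<bullet> (A *v x))"

definition pd :: "real^'n^'n \<Rightarrow> bool" where
  "pd A \<longleftrightarrow> transpose A = A \<and> (\<forall>x. x \<noteq> 0 \<longrightarrow> 0 < x \<bullet> (A *v x))"

definition matrix_algebra :: "(real^'n^'n) set \<Rightarrow> bool" where
  "matrix_algebra K \<longleftrightarrow>
     (\<forall>c A. A \<in> K \<longrightarrow> c *\<^sub>R A \<in> K) \<and>
     (\<forall>A B. A \<in> K \<longrightarrow> B \<in> K \<longrightarrow> A + B \<in> K) \<and>
     (\<forall>A B. A \<in> K \<longrightarrow> B \<in> K \<longrightarrow> A ** B \<in> K) \<and>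
     mat 1 \<in> K"

definition well_structured :: "(real^'n^'n) set \<Rightarrow> bool" where
  "well_structured \<H> \<longleftrightarrow> (\<exists>K. matrix_algebra K \<and> \<H> = {A. psd A} \<inter> K)"

definition Hnorm :: "real^'n^'n \<Rightarrow> real^'n \<Rightarrow> real" where
  "Hnorm H x = sqrt (x \<bullet> (H *v x))"

definition setnorm :: "(real^'n^'n) set \<Rightarrow> real^'n \<Rightarrow> real" where
  "setnorm \<H> x = (SUP H\<in>{H\<in>\<H>. trace H \<le> 1}. Hnorm H x)"

definition dual_norm :: "(real^'n \<Rightarrow> real) \<Rightarrow> real^'n \<Rightarrow> real" where
  "dual_norm N y = Sup {x \<bullet> y | x. N x \<le> 1}"

end

theory Submission
  imports Defs
begin

lemma smv: "((c::real) *\<^sub>R (A::real^'n^'m)) *v x = c *\<^sub>R (A *v x)"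
  by (simp add: matrix_vector_mult_def vec_eq_iff sum_distrib_left mult.assoc)

lemma sym_form:
  fixes M :: "real^'n^'n"
  assumes "transpose M = M"
  shows "a \<bullet> (M *v b) = b \<bullet> (M *v a)"
proof -
  have "b \<bullet> (M *v a) = (b v* M) \<bullet> a" by (simp add: dot_lmul_matrix)
  also have "b v* M = transpose M *v b" by simp
  finally show ?thesis using assms by (simp add: inner_commute)
qed

lemma cs_psd:
  fixes M :: "real^'n^'n"
  assumes "psd M"
  shows "(a \<bullet> (M *v b))^2 \<le> (a \<bullet> (M *v a)) * (b \<bullet> (M *v b))"
proof -
  have S: "transpose M = M" and P: "\<And>x. 0 \<le> x \<bullet> (M *v x)" using assms by (auto simp: psd_def)
  define A where "A = a \<bullet> (M *v a)"
  define B where "B = a \<bullet> (M *v b)"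
  define C where "C = b \<bullet> (M *v b)"
  have q: "0 \<le> A + 2*l*B + l^2 * C" for l
  proof -
    have "0 \<le> (a + l *\<^sub>R b) \<bullet> (M *v (a + l *\<^sub>R b))" by (rule P)
    also have "\<dots> = A + 2*l*B + l^2 * C"
      using sym_form[OF S, of b a]
      by (simp add: A_def B_def C_def matrix_vector_right_distrib inner_add_left inner_add_right
          matrix_vector_mult_scaleR power2_eq_square algebra_simps)
    finally show ?thesis .
  qed
  have A0: "0 \<le> A" and C0: "0 \<le> C" using P by (auto simp: A_def C_def)
  show ?thesis
  proof (cases "C = 0")
    case True
    then have "B = 0" using q[of "-(A+1)/(2*B)"] A0
      by (cases "B = 0") (auto simp: field_simps)
    then show ?thesis using True by (simp add: B_def C_def)
  next
    case False
    then have Cp: "C > 0" using C0 by simp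
    have "0 \<le> A + 2*(-B/C)*B + (-B/C)^2 * C" by (rule q)
    then have "0 \<le> A*C - B^2" using Cp by (simp add: field_simps power2_eq_square)
    then show ?thesis by (simp add: A_def B_def C_def algebra_simps)
  qed
qed

lemma psd_diag: "psd H \<Longrightarrow> axis i 1 \<bullet> (H *v axis i 1) = H$i$i"
  by (simp add: matrix_vector_mult_basis inner_axis' column_def)

lemma psd_diag_nonneg: "psd H \<Longrightarrow> 0 \<le> H$i$i"
  by (metis psd_diag psd_def)

lemma psd_quad_le_trace:
  fixes H :: "real^'n^'n"
  assumes "psd H"
  shows "u \<bullet> (H *v u) \<le> trace H * (norm u)^2"
proof -
  define q where "q = u \<bullet> (H *v u)"
  have q0: "0 \<le> q" using assms by (auto simp: psd_def q_def)
  have comp: "\<bar>(H *v u)$i\<bar> \<le> sqrt (H$i$i) * sqrt q" for i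
  proof -
    have "((H *v u)$i)^2 = (axis i 1 \<bullet> (H *v u))^2" by (simp add: inner_axis')
    also have "\<dots> \<le> H$i$i * q" using cs_psd[OF assms, of "axis i 1" u] psd_diag[OF assms, of i]
      by (simp add: q_def)
    finally have "((H *v u)$i)^2 \<le> H$i$i * q" .
    then have "sqrt (((H *v u)$i)^2) \<le> sqrt (H$i$i * q)" by (rule real_sqrt_le_mono)
    then show ?thesis by (simp add: real_sqrt_mult)
  qed
  define a where "a = (\<chi> i. \<bar>u$i\<bar>)"
  define b where "b = (\<chi> i. sqrt (H$i$i))"
  have "q = (\<Sum>i\<in>UNIV. u$i * (H *v u)$i)" by (simp add: q_def inner_vec_def)
  also have "\<dots> \<le> (\<Sum>i\<in>UNIV. \<bar>u$i\<bar> * (sqrt (H$i$i) * sqrt q))"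
  proof (rule sum_mono)
    fix i
    have "u$i * (H *v u)$i \<le> \<bar>u$i\<bar> * \<bar>(H *v u)$i\<bar>" by (simp add: abs_mult[symmetric])
    also have "\<dots> \<le> \<bar>u$i\<bar> * (sqrt (H$i$i) * sqrt q)" by (rule mult_left_mono[OF comp]) simp
    finally show "u$i * (H *v u)$i \<le> \<bar>u$i\<bar> * (sqrt (H$i$i) * sqrt q)" .
  qed
  also have "\<dots> = (a \<bullet> b) * sqrt q" by (simp add: a_def b_def inner_vec_def sum_distrib_right mult.assoc)
  also have "\<dots> \<le> (norm a * norm b) * sqrt q"
    by (rule mult_right_mono[OF norm_cauchy_schwarz]) (simp add: q0)
  also have "norm a = norm u" by (simp add: a_def norm_vec_def L2_set_def)
  also have "norm b = sqrt (trace H)"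
    using psd_diag_nonneg[OF assms] by (simp add: b_def norm_vec_def L2_set_def trace_def)
  finally have *: "q \<le> norm u * sqrt (trace H) * sqrt q" .
  have "sqrt q \<le> norm u * sqrt (trace H)"
  proof (cases "q = 0")
    case True then show ?thesis by (simp add: psd_diag_nonneg[OF assms] trace_def sum_nonneg)
  next
    case False
    then have "sqrt q > 0" using q0 by simp
    moreover have "sqrt q * sqrt q \<le> norm u * sqrt (trace H) * sqrt q" using * q0 by simp
    ultimately show ?thesis by (metis mult_le_cancel_right_pos)
  qed
  then have "(sqrt q)^2 \<le> (norm u * sqrt (trace H))^2" by (rule power_mono) (simp add: q0)
  then show ?thesis using q0 psd_diag_nonneg[OF assms]
    by (simp add: q_def power_mult_distrib trace_def sum_nonneg mult.commute)
qed

lemma matrix_inv_props: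
  fixes M :: "real^'n^'n"
  assumes "invertible M"
  shows "M ** matrix_inv M = mat 1" "matrix_inv M ** M = mat 1"
proof -
  have "\<exists>A'. M ** A' = mat 1 \<and> A' ** M = mat 1" using assms by (simp add: invertible_def)
  then have "M ** matrix_inv M = mat 1 \<and> matrix_inv M ** M = mat 1"
    unfolding matrix_inv_def by (rule someI_ex)
  then show "M ** matrix_inv M = mat 1" "matrix_inv M ** M = mat 1" by auto
qed

lemma inv_apply:
  fixes M :: "real^'n^'n"
  assumes "invertible M"
  shows "M *v (matrix_inv M *v y) = y"
  by (simp add: matrix_vector_mul_assoc matrix_inv_props[OF assms])

lemma inv_unique:
  fixes M :: "real^'n^'n"
  assumes "invertible M" "M *v z = y"
  shows "matrix_inv M *v y = z"
  using assms(2)[symmetric] by (simp add: matrix_vector_mul_assoc matrix_inv_props[OF assms(1)])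

lemma pd_invertible:
  fixes M :: "real^'n^'n"
  assumes "pd M"
  shows "invertible M"
proof -
  have "\<forall>x. M *v x = 0 \<longrightarrow> x = 0"
  proof (intro allI impI)
    fix x assume "M *v x = 0"
    then have "x \<bullet> (M *v x) = 0" by simp
    then show "x = 0" using assms unfolding pd_def by force
  qed
  then show ?thesis using matrix_left_invertible_ker invertible_left_inverse by blast
qed

lemma pd_psd: "pd M \<Longrightarrow> psd M"
  unfolding pd_def psd_def by (metis inner_zero_left less_eq_real_def)

lemma pd_dual:
  fixes P :: "real^'n^'n"
  assumes "pd P"
  shows "\<And>x. Hnorm P x \<le> 1 \<Longrightarrow> x \<bullet> y \<le> Hnorm (matrix_inv P) y"
    and "dual_norm (Hnorm P) y = Hnorm (matrix_inv P) y"
proof -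
  have inv: "invertible P" by (rule pd_invertible[OF assms])
  have ps: "psd P" by (rule pd_psd[OF assms])
  define x0 where "x0 = matrix_inv P *v y"
  have Px0: "P *v x0 = y" by (simp add: x0_def inv_apply[OF inv])
  define q where "q = x0 \<bullet> (P *v x0)"
  have q0: "0 \<le> q" using ps by (simp add: psd_def q_def)
  have hq: "Hnorm (matrix_inv P) y = sqrt q"
    by (simp add: Hnorm_def q_def x0_def inv_apply[OF inv] inner_commute)
  have bound: "x \<bullet> y \<le> sqrt q" if "Hnorm P x \<le> 1" for x
  proof -
    have a: "x \<bullet> (P *v x) \<le> 1" using that by (simp add: Hnorm_def)
    have "(x \<bullet> y)^2 \<le> (x \<bullet> (P *v x)) * q" using cs_psd[OF ps, of x x0] by (simp add: Px0 q_def)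
    also have "\<dots> \<le> q" using a q0 by (simp add: mult_left_le_one_le ps[unfolded psd_def])
    finally have "(x \<bullet> y)^2 \<le> q" .
    then show ?thesis by (rule real_le_rsqrt)
  qed
  then show "\<And>x. Hnorm P x \<le> 1 \<Longrightarrow> x \<bullet> y \<le> Hnorm (matrix_inv P) y" using hq by simp
  have attain: "\<exists>x. Hnorm P x \<le> 1 \<and> x \<bullet> y = sqrt q"
  proof (cases "q = 0")
    case True
    then have "x0 = 0" using assms by (auto simp: pd_def q_def)
    then have "y = 0" using Px0 by simp
    then show ?thesis using True by (intro exI[of _ 0]) (simp add: Hnorm_def)
  next
    case False
    then have qp: "q > 0" using q0 by simp
    define x where "x = (1 / sqrt q) *\<^sub>R x0"
    have "x \<bullet> (P *v x) = (1 / sqrt q)^2 * q"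
      by (simp add: x_def q_def matrix_vector_mult_scaleR power2_eq_square)
    also have "\<dots> = 1" using qp by (simp add: power_divide)
    finally have "Hnorm P x \<le> 1" by (simp add: Hnorm_def)
    moreover have "x \<bullet> y = sqrt q"
    proof -
      have "x \<bullet> y = q / sqrt q" by (simp add: x_def q_def Px0 inner_commute)
      also have "\<dots> = sqrt q" using qp by (simp add: real_div_sqrt)
      finally show ?thesis .
    qed
    ultimately show ?thesis by blast
  qed
  show "dual_norm (Hnorm P) y = Hnorm (matrix_inv P) y"
    unfolding dual_norm_def hq
  proof (rule cSup_eq_maximum)
    show "sqrt q \<in> {x \<bullet> y |x. Hnorm P x \<le> 1}" using attain by (metis (mono_tags, lifting) mem_Collect_eq)
    show "\<And>z. z \<in> {x \<bullet> y |x. Hnorm P x \<le> 1} \<Longrightarrow> z \<le> sqrt q" using bound by auto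
  qed
qed

lemma quad_le_norm:
  fixes H :: "real^'n^'n"
  assumes "psd H" "trace H \<le> 1"
  shows "u \<bullet> (H *v u) \<le> (norm u)^2"
proof -
  have "u \<bullet> (H *v u) \<le> trace H * (norm u)^2" by (rule psd_quad_le_trace[OF assms(1)])
  also have "\<dots> \<le> 1 * (norm u)^2" by (rule mult_right_mono[OF assms(2)]) simp
  also have "\<dots> = (norm u)^2" by simp
  finally show ?thesis .
qed

lemma cs_bound:
  fixes H :: "real^'n^'n"
  assumes "psd H" "trace H \<le> 1"
  shows "\<bar>a \<bullet> (H *v b)\<bar> \<le> norm a * norm b"
proof -
  have a0: "0 \<le> a \<bullet> (H *v a)" and b0: "0 \<le> b \<bullet> (H *v b)" using assms(1) by (auto simp: psd_def)
  have "(a \<bullet> (H *v b))^2 \<le> (a \<bullet> (H *v a)) * (b \<bullet> (H *v b))" by (rule cs_psd[OF assms(1)])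
  also have "\<dots> \<le> (norm a)^2 * (norm b)^2"
    by (rule mult_mono[OF quad_le_norm[OF assms] quad_le_norm[OF assms]]) (simp_all add: b0)
  also have "\<dots> = (norm a * norm b)^2" by (simp add: power_mult_distrib)
  finally have "\<bar>a \<bullet> (H *v b)\<bar>^2 \<le> (norm a * norm b)^2" by (simp only: power2_abs)
  then show ?thesis by (rule power2_le_imp_le) simp
qed

lemma transpose_add': "transpose (A + B) = transpose A + transpose (B::real^'n^'n)"
  by (simp add: transpose_def vec_eq_iff)

lemma psd_add: "psd A \<Longrightarrow> psd B \<Longrightarrow> psd (A + B)"
  unfolding psd_def by (simp only: transpose_add' matrix_vector_mult_add_rdistrib inner_add_right) (simp add: add_nonneg_nonneg)

lemma psd_scale: "psd A \<Longrightarrow> 0 \<le> c \<Longrightarrow> psd (c *\<^sub>R A)"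
  unfolding psd_def by (simp only: transpose_scalar smv inner_scaleR_right) simp

lemma psd_id: "psd (mat 1)"
  unfolding psd_def by simp

lemma trace_scale: "trace (c *\<^sub>R (A::real^'n^'n)) = c * trace A"
  by (simp add: trace_def sum_distrib_left)

lemma quad_shift:
  fixes H :: "real^'n^'n"
  shows "x \<bullet> ((H + d *\<^sub>R mat 1) *v x) = x \<bullet> (H *v x) + d * (norm x)^2"
  by (simp add: matrix_vector_mult_add_rdistrib smv inner_add_right power2_norm_eq_inner)

lemma pd_shift:
  fixes H :: "real^'n^'n"
  assumes "psd H" "d > 0"
  shows "pd (H + d *\<^sub>R mat 1)"
  unfolding pd_def
proof
  show "transpose (H + d *\<^sub>R mat 1) = H + d *\<^sub>R mat 1"
    using assms(1) unfolding psd_def by (simp only: transpose_add' transpose_scalar transpose_mat)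
  show "\<forall>x. x \<noteq> 0 \<longrightarrow> 0 < x \<bullet> ((H + d *\<^sub>R mat 1) *v x)"
  proof (intro allI impI)
    fix x :: "real^'n" assume "x \<noteq> 0"
    then have "0 < d * (norm x)^2" using assms(2) by simp
    moreover have "0 \<le> x \<bullet> (H *v x)" using assms(1) unfolding psd_def by blast
    ultimately show "0 < x \<bullet> ((H + d *\<^sub>R mat 1) *v x)" unfolding quad_shift by linarith
  qed
qed

lemma var_ineq:
  fixes H H' :: "real^'n^'n"
  assumes pH: "psd H" and pH': "psd H'" and tH: "trace H \<le> 1" and tH': "trace H' \<le> 1"
    and d: "d > 0" and t0: "0 \<le> t" and t1: "t \<le> 1"
    and Mx: "(H + d *\<^sub>R mat 1) *v x = y"
    and Nz: "(((1-t) *\<^sub>R H + t *\<^sub>R H') + d *\<^sub>R mat 1) *v z = y"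
  shows "y \<bullet> z \<le> y \<bullet> x - t * (x \<bullet> (H' *v x) - x \<bullet> (H *v x)) + 4 * t^2 * (norm x)^2 / d"
proof -
  define M where "M = H + d *\<^sub>R mat 1"
  define D where "D = H' - H"
  define N where "N = ((1-t) *\<^sub>R H + t *\<^sub>R H') + d *\<^sub>R mat 1"
  define w where "w = z - x"
  have NMD: "N = M + t *\<^sub>R D" by (simp add: N_def M_def D_def algebra_simps)
  have symM: "transpose M = M" using pd_shift[OF pH d] by (simp add: M_def pd_def)
  have symD: "transpose D = D" using pH pH' by (simp add: D_def psd_def transpose_def vec_eq_iff)
  have psdN: "psd ((1-t) *\<^sub>R H + t *\<^sub>R H')" using pH pH' t0 t1 by (simp add: psd_add psd_scale)
  have zw: "z = x + w" by (simp add: w_def)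
  have eq: "M *v w + t *\<^sub>R (D *v x) + t *\<^sub>R (D *v w) = 0"
  proof -
    have "y = N *v z" using Nz by (simp add: N_def)
    also have "\<dots> = M *v x + M *v w + t *\<^sub>R (D *v x) + t *\<^sub>R (D *v w)"
      by (simp add: NMD zw matrix_vector_mult_add_rdistrib matrix_vector_right_distrib smv algebra_simps)
    finally show ?thesis using Mx by (simp add: M_def add.assoc)
  qed
  have ex: "x \<bullet> (M *v w) + t * (x \<bullet> (D *v x)) + t * (x \<bullet> (D *v w)) = 0"
    using arg_cong[OF eq, of "\<lambda>v. x \<bullet> v"] by (simp add: inner_add_right)
  have ew: "w \<bullet> (M *v w) + t * (w \<bullet> (D *v x)) + t * (w \<bullet> (D *v w)) = 0"
    using arg_cong[OF eq, of "\<lambda>v. w \<bullet> v"] by (simp add: inner_add_right)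
  have s1: "x \<bullet> (M *v w) = y \<bullet> w" using sym_form[OF symM, of x w] Mx by (simp add: M_def inner_commute)
  have s2: "x \<bullet> (D *v w) = w \<bullet> (D *v x)" by (rule sym_form[OF symD])
  have wNw: "w \<bullet> (N *v w) = w \<bullet> (M *v w) + t * (w \<bullet> (D *v w))"
    by (simp add: NMD matrix_vector_mult_add_rdistrib smv inner_add_right)
  have yz: "y \<bullet> z = y \<bullet> x - t * (x \<bullet> (D *v x)) + w \<bullet> (N *v w)"
    using ex ew s1 s2 wNw by (simp add: zw inner_add_right)
  have Dx: "x \<bullet> (D *v x) = x \<bullet> (H' *v x) - x \<bullet> (H *v x)"
    by (simp add: D_def matrix_vector_mult_diff_rdistrib inner_diff_right)
  have wNw2: "w \<bullet> (N *v w) = - t * (w \<bullet> (D *v x))" using ew wNw by simp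
  have "\<bar>w \<bullet> (D *v x)\<bar> \<le> 2 * norm w * norm x"
  proof -
    have "w \<bullet> (D *v x) = w \<bullet> (H' *v x) - w \<bullet> (H *v x)"
      by (simp add: D_def matrix_vector_mult_diff_rdistrib inner_diff_right)
    then show ?thesis using cs_bound[OF pH' tH', of w x] cs_bound[OF pH tH, of w x] by linarith
  qed
  then have "- (w \<bullet> (D *v x)) \<le> 2 * norm w * norm x" by linarith
  then have "t * (- (w \<bullet> (D *v x))) \<le> t * (2 * norm w * norm x)" using t0 by (rule mult_left_mono)
  then have up: "w \<bullet> (N *v w) \<le> 2 * t * norm w * norm x" unfolding wNw2 by (simp only: mult_minus_left mult_minus_right mult_ac)
  have low: "d * (norm w)^2 \<le> w \<bullet> (N *v w)"
  proof -
    have "0 \<le> w \<bullet> (((1-t) *\<^sub>R H + t *\<^sub>R H') *v w)" using psdN unfolding psd_def by blast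
    then show ?thesis unfolding N_def quad_shift by linarith
  qed
  have "w \<bullet> (N *v w) \<le> 4 * t^2 * (norm x)^2 / d"
  proof -
    have "d * (norm w)^2 \<le> 2 * t * norm w * norm x" using low up by linarith
    then have nw: "d * norm w \<le> 2 * t * norm x"
      using t0 by (cases "norm w = 0") (auto simp: power2_eq_square mult.assoc[symmetric] mult_le_cancel_right)
    have "w \<bullet> (N *v w) \<le> (2 * t * norm x) * norm w" using up by (simp add: mult_ac)
    also have "\<dots> \<le> (2 * t * norm x) * (2 * t * norm x / d)"
      using nw d t0 by (intro mult_left_mono) (simp_all add: field_simps)
    also have "\<dots> = 4 * t^2 * (norm x)^2 / d" by (simp add: power2_eq_square)
    finally show ?thesis .
  qed
  then show ?thesis using yz Dx by simp
qed

lemma le_eps: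
  fixes m b k :: real
  assumes k: "k \<ge> 0" and h: "\<And>t. 0 < t \<Longrightarrow> t < 1 \<Longrightarrow> m \<le> b + t * k"
  shows "m \<le> b"
proof (rule ccontr)
  assume "\<not> m \<le> b"
  then have mb: "m - b > 0" by simp
  define t where "t = min (1/2) ((m - b) / (2 * (k + 1)))"
  have t0: "0 < t" using mb k by (simp add: t_def)
  have t1: "t < 1" by (simp add: t_def)
  have "t * k \<le> (m - b) / (2 * (k + 1)) * k" using k by (intro mult_right_mono) (simp_all add: t_def)
  also have "\<dots> < m - b"
  proof -
    have "(m - b) / (2 * (k + 1)) * k = (m - b) * (k / (2 * (k + 1)))" by simp
    also have "\<dots> < (m - b) * 1" using mb k by (intro mult_strict_left_mono) (simp_all add: field_simps)
    finally show ?thesis by simp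
  qed
  finally show False using h[OF t0 t1] by linarith
qed

lemma pd_scale: "pd A \<Longrightarrow> 0 < c \<Longrightarrow> pd (c *\<^sub>R A)"
  unfolding pd_def by (simp only: transpose_scalar smv inner_scaleR_right) simp

theorem lemma2p1:
  fixes \<H> :: "(real^'n^'n) set" and y :: "real^'n"
  assumes "well_structured \<H>"
  shows "dual_norm (setnorm \<H>) y
           = (INF H\<in>{H\<in>\<H>. pd H \<and> trace H \<le> 1}. dual_norm (Hnorm H) y)
       \<and> (INF H\<in>{H\<in>\<H>. pd H \<and> trace H \<le> 1}. dual_norm (Hnorm H) y)
           = (INF H\<in>{H\<in>\<H>. pd H \<and> trace H \<le> 1}. Hnorm (matrix_inv H) y)"
proof -
  obtain K where K: "matrix_algebra K" and HK: "\<H> = {A. psd A} \<inter> K"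
    using assms unfolding well_structured_def by blast
  have Ksc: "\<And>c A. A \<in> K \<Longrightarrow> c *\<^sub>R A \<in> K" and Kadd: "\<And>A B. A \<in> K \<Longrightarrow> B \<in> K \<Longrightarrow> A + B \<in> K"
    and KI: "mat 1 \<in> K"
    using K unfolding matrix_algebra_def by blast+
  define C where "C = {H\<in>\<H>. trace H \<le> 1}"
  define Cp where "Cp = {H\<in>\<H>. pd H \<and> trace H \<le> 1}"
  have memC: "H \<in> C \<longleftrightarrow> psd H \<and> H \<in> K \<and> trace H \<le> 1" for H by (auto simp: C_def HK)
  have memCp: "H \<in> Cp \<longleftrightarrow> pd H \<and> H \<in> K \<and> trace H \<le> 1" for H
    using pd_psd by (auto simp: Cp_def HK)
  have CpC: "H \<in> Cp \<Longrightarrow> H \<in> C" for H using memC memCp pd_psd by blast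
  have zeroC: "0 \<in> C"
  proof -
    have "(0::real) *\<^sub>R mat 1 \<in> K" by (rule Ksc[OF KI])
    moreover have "psd ((0::real) *\<^sub>R (mat 1::real^'n^'n))" by (rule psd_scale[OF psd_id]) simp
    ultimately show ?thesis by (simp add: memC trace_def)
  qed
  have Cne: "C \<noteq> {}" using zeroC by blast
  define dd where "dd = real CARD('n)"
  have dd1: "dd \<ge> 1" by (simp add: dd_def)
  have trI: "trace (mat 1 :: real^'n^'n) = dd" by (simp add: trace_I dd_def)
  define P0 where "P0 = (1/dd) *\<^sub>R (mat 1 :: real^'n^'n)"
  have P0: "P0 \<in> Cp"
  proof -
    have "pd (mat 1 :: real^'n^'n)" unfolding pd_def by simp
    then have "pd P0" unfolding P0_def using dd1 by (intro pd_scale) simp_all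
    moreover have "P0 \<in> K" unfolding P0_def by (rule Ksc[OF KI])
    moreover have "trace P0 \<le> 1" using dd1 by (simp add: P0_def trace_scale trI)
    ultimately show ?thesis by (simp add: memCp)
  qed
  have Cpne: "Cp \<noteq> {}" using P0 by blast
  have SN: "setnorm \<H> x = (SUP H\<in>C. Hnorm H x)" for x by (simp add: setnorm_def C_def)
  have Hn_le: "Hnorm H x \<le> norm x" if "H \<in> C" for H x
  proof -
    have "x \<bullet> (H *v x) \<le> (norm x)^2" using that by (intro quad_le_norm) (simp_all add: memC)
    then have "Hnorm H x \<le> sqrt ((norm x)^2)" unfolding Hnorm_def by (rule real_sqrt_le_mono)
    then show ?thesis by simp
  qed
  have bddS: "bdd_above ((\<lambda>H. Hnorm H x) ` C)" for x
    using Hn_le by (intro bdd_aboveI[of _ "norm x"]) blast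
  have S3: "H \<in> C \<Longrightarrow> Hnorm H x \<le> setnorm \<H> x" for H x
    unfolding SN by (rule cSUP_upper[OF _ bddS])
  have S4: "(\<And>H. H \<in> C \<Longrightarrow> Hnorm H x \<le> b) \<Longrightarrow> setnorm \<H> x \<le> b" for x b
    unfolding SN by (rule cSUP_least[OF Cne])
  define Sv where "Sv = {x \<bullet> y |x. setnorm \<H> x \<le> 1}"
  define v where "v = dual_norm (setnorm \<H>) y"
  have vSv: "v = Sup Sv" by (simp add: v_def dual_norm_def Sv_def)
  have bddSv: "bdd_above Sv"
  proof (rule bdd_aboveI[of _ "Hnorm (matrix_inv P0) y"])
    fix z assume "z \<in> Sv"
    then obtain x where z: "z = x \<bullet> y" and sx: "setnorm \<H> x \<le> 1" by (auto simp: Sv_def)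
    have "Hnorm P0 x \<le> 1" using S3[OF CpC[OF P0], of x] sx by linarith
    then show "z \<le> Hnorm (matrix_inv P0) y" unfolding z
      using pd_dual(1)[of P0] P0 by (simp add: memCp)
  qed
  have sn0: "setnorm \<H> 0 \<le> 1" by (rule S4) (simp add: Hnorm_def)
  have Sv0: "0 \<in> Sv" unfolding Sv_def using sn0 by force
  have Svne: "Sv \<noteq> {}" using Sv0 by blast
  have v_upper: "setnorm \<H> x \<le> 1 \<Longrightarrow> x \<bullet> y \<le> v" for x
    unfolding vSv by (rule cSup_upper[OF _ bddSv]) (auto simp: Sv_def)
  have v0: "0 \<le> v" using v_upper[OF sn0] by simp
  have eqINF: "(INF H\<in>Cp. dual_norm (Hnorm H) y) = (INF H\<in>Cp. Hnorm (matrix_inv H) y)"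
    by (rule INF_cong) (simp_all add: pd_dual(2) memCp)
  define r where "r = (INF H\<in>Cp. Hnorm (matrix_inv H) y)"
  have Hinv0: "0 \<le> Hnorm (matrix_inv H) y" if "H \<in> Cp" for H
  proof -
    have pH: "pd H" using that by (simp add: memCp)
    have inv: "invertible H" by (rule pd_invertible[OF pH])
    define x0 where "x0 = matrix_inv H *v y"
    have "y \<bullet> (matrix_inv H *v y) = x0 \<bullet> (H *v x0)"
      by (simp add: x0_def inv_apply[OF inv] inner_commute)
    also have "\<dots> \<ge> 0" using pd_psd[OF pH] by (simp add: psd_def)
    finally show ?thesis by (simp add: Hnorm_def)
  qed
  have bddr: "bdd_below ((\<lambda>H. Hnorm (matrix_inv H) y) ` Cp)"
    using Hinv0 by (intro bdd_belowI[of _ 0]) blast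
  have r_lower: "H \<in> Cp \<Longrightarrow> r \<le> Hnorm (matrix_inv H) y" for H
    unfolding r_def by (rule cINF_lower[OF bddr])
  have r0: "0 \<le> r" unfolding r_def by (rule cINF_greatest[OF Cpne]) (rule Hinv0)
  have v_le_r: "v \<le> r"
    unfolding r_def
  proof (rule cINF_greatest[OF Cpne])
    fix H assume HC: "H \<in> Cp"
    show "v \<le> Hnorm (matrix_inv H) y"
      unfolding vSv
    proof (rule cSup_least[OF Svne])
      fix z assume "z \<in> Sv"
      then obtain x where z: "z = x \<bullet> y" and sx: "setnorm \<H> x \<le> 1" by (auto simp: Sv_def)
      have "Hnorm H x \<le> 1" using S3[OF CpC[OF HC], of x] sx by linarith
      then show "z \<le> Hnorm (matrix_inv H) y" unfolding z
        using pd_dual(1)[of H] HC by (simp add: memCp)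
    qed
  qed
  have r_le_v: "r \<le> v"
  proof -
  have key: "r^2 \<le> (1 + dd * \<delta>) * v^2" if dpos: "\<delta> > 0" for \<delta>
  proof -
    define M where "M H = H + \<delta> *\<^sub>R (mat 1 :: real^'n^'n)" for H
    define X where "X H = matrix_inv (M H) *v y" for H
    define val where "val H = y \<bullet> X H" for H
    have Mpd: "pd (M H)" if "H \<in> C" for H
      unfolding M_def using that dpos by (intro pd_shift) (simp_all add: memC)
    have MX: "M H *v X H = y" if "H \<in> C" for H
      unfolding X_def by (rule inv_apply[OF pd_invertible[OF Mpd[OF that]]])
    have valq: "val H = X H \<bullet> (H *v X H) + \<delta> * (norm (X H))^2" if "H \<in> C" for H
    proof -
      have "val H = X H \<bullet> (M H *v X H)" unfolding val_def using MX[OF that] by (simp add: inner_commute)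
      then show ?thesis unfolding M_def quad_shift .
    qed
    have qH0: "0 \<le> X H \<bullet> (H *v X H)" if "H \<in> C" for H using that by (simp add: memC psd_def)
    have val0: "0 \<le> val H" if "H \<in> C" for H using valq[OF that] qH0[OF that] dpos by simp
    have Xb: "(norm (X H))^2 \<le> (norm y)^2 / \<delta>^2" if HC: "H \<in> C" for H
    proof -
      have "\<delta> * (norm (X H))^2 \<le> val H" using valq[OF HC] qH0[OF HC] by simp
      also have "\<dots> \<le> norm y * norm (X H)" unfolding val_def by (rule norm_cauchy_schwarz)
      finally have a: "\<delta> * (norm (X H))^2 \<le> norm y * norm (X H)" .
      have "\<delta> * norm (X H) \<le> norm y"
      proof (cases "norm (X H) = 0")
        case True then show ?thesis by simp
      next
        case False
        then have "norm (X H) > 0" by simp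
        moreover have "(\<delta> * norm (X H)) * norm (X H) \<le> norm y * norm (X H)"
          using a by (simp add: power2_eq_square mult.assoc)
        ultimately show ?thesis by (simp add: mult_le_cancel_right)
      qed
      then have "(\<delta> * norm (X H))^2 \<le> (norm y)^2" using dpos by (intro power_mono) simp_all
      then show ?thesis using dpos by (simp add: field_simps power_mult_distrib)
    qed
    define m where "m = Inf (val ` C)"
    have bddv: "bdd_below (val ` C)" using val0 by (intro bdd_belowI[of _ 0]) blast
    have m_lower: "m \<le> val H" if "H \<in> C" for H
      unfolding m_def using bddv that by (simp add: cInf_lower)
    have trM: "trace (M H) = trace H + \<delta> * dd" for H
      by (simp add: M_def trace_add trace_scale trI)
    have r_val: "r^2 \<le> (1 + dd * \<delta>) * val H" if HC: "H \<in> C" for H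
    proof -
      define s where "s = 1 + dd * \<delta>"
      have s1: "s \<ge> 1" using dd1 dpos by (simp add: s_def)
      define P where "P = (1/s) *\<^sub>R M H"
      have PCp: "P \<in> Cp"
      proof -
        have "pd P" unfolding P_def using s1 Mpd[OF HC] by (intro pd_scale) simp_all
        moreover have "P \<in> K" unfolding P_def M_def using HC KI
          by (intro Ksc Kadd) (simp_all add: memC)
        moreover have "trace P \<le> 1"
        proof -
          have "trace P = (trace H + \<delta> * dd) / s" by (simp add: P_def trace_scale trM)
          also have "\<dots> \<le> 1" using HC s1 by (simp add: memC s_def field_simps)
          finally show ?thesis .
        qed
        ultimately show ?thesis by (simp add: memCp)
      qed
      have "matrix_inv P *v y = s *\<^sub>R X H"
      proof (rule inv_unique)
        show "invertible P" using PCp by (intro pd_invertible) (simp add: memCp)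
        show "P *v (s *\<^sub>R X H) = y" using s1 MX[OF HC]
          by (simp add: P_def smv matrix_vector_mult_scaleR)
      qed
      then have "Hnorm (matrix_inv P) y = sqrt (s * val H)" by (simp add: Hnorm_def val_def)
      then have "r \<le> sqrt (s * val H)" using r_lower[OF PCp] by simp
      then have "r^2 \<le> (sqrt (s * val H))^2" using r0 by (intro power_mono) simp_all
      also have "\<dots> = s * val H" using s1 val0[OF HC] by simp
      finally show ?thesis by (simp add: s_def)
    qed
    have m_ge: "r^2 / (1 + dd * \<delta>) \<le> m"
      unfolding m_def
    proof (rule cInf_greatest)
      show "val ` C \<noteq> {}" using Cne by blast
      fix z assume "z \<in> val ` C"
      then obtain H where HC: "H \<in> C" and z: "z = val H" by blast
      have "1 + dd * \<delta> > 0" using dd1 dpos by (simp add: add_pos_nonneg)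
      then show "r^2 / (1 + dd * \<delta>) \<le> z" using r_val[OF HC] by (simp add: z divide_le_eq mult.commute)
    qed
    have mv: "m \<le> v^2"
    proof (cases "m \<le> 0")
      case True then show ?thesis by (meson order_trans zero_le_power2)
    next
      case False
      then have mpos: "m > 0" by simp
      define c where "c = 1 + 4 * (norm y)^2 / \<delta>^3"
      have cpos: "c > 0" using dpos by (simp add: c_def add_pos_nonneg)
      show ?thesis
      proof (rule le_eps[of "v^2 * c / m"])
        show "0 \<le> v^2 * c / m" using cpos mpos by simp
        fix t :: real assume t0: "0 < t" and t1: "t < 1"
        have "Inf (val ` C) < m + t^2" using t0 by (simp add: m_def)
        then obtain H where HC: "H \<in> C" and vH: "val H < m + t^2"
          using cInf_lessD[of "val ` C" "m + t^2"] Cne by blast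
        define x where "x = X H"
        define a where "a = val H"
        have am: "m \<le> a" unfolding a_def by (rule m_lower[OF HC])
        have step: "x \<bullet> (H' *v x) \<le> a + t * c" if H'C: "H' \<in> C" for H'
        proof -
          define Ht where "Ht = (1-t) *\<^sub>R H + t *\<^sub>R H'"
          have HtC: "Ht \<in> C"
          proof -
            have "psd Ht" unfolding Ht_def using HC H'C t0 t1
              by (intro psd_add psd_scale) (simp_all add: memC)
            moreover have "Ht \<in> K" unfolding Ht_def using HC H'C by (intro Ksc Kadd) (simp_all add: memC)
            moreover have "trace Ht \<le> 1"
            proof -
              have "trace Ht = (1-t) * trace H + t * trace H'" by (simp add: Ht_def trace_add trace_scale)
              also have "\<dots> \<le> (1-t) * 1 + t * 1"
                using HC H'C t0 t1 by (intro add_mono mult_left_mono) (simp_all add: memC)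
              finally show ?thesis by simp
            qed
            ultimately show ?thesis by (simp add: memC)
          qed
          have vi: "y \<bullet> X Ht \<le> y \<bullet> x - t * (x \<bullet> (H' *v x) - x \<bullet> (H *v x)) + 4 * t^2 * (norm x)^2 / \<delta>"
          proof (rule var_ineq)
            show "psd H" "trace H \<le> 1" using HC by (simp_all add: memC)
            show "psd H'" "trace H' \<le> 1" using H'C by (simp_all add: memC)
            show "\<delta> > 0" "0 \<le> t" "t \<le> 1" using dpos t0 t1 by simp_all
            show "(H + \<delta> *\<^sub>R mat 1) *v x = y" using MX[OF HC] by (simp add: M_def x_def)
            show "((1 - t) *\<^sub>R H + t *\<^sub>R H' + \<delta> *\<^sub>R mat 1) *v X Ht = y"
              using MX[OF HtC] by (simp add: M_def Ht_def)
          qed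
          have "m \<le> val Ht" by (rule m_lower[OF HtC])
          then have "m \<le> a - t * (x \<bullet> (H' *v x) - x \<bullet> (H *v x)) + 4 * t^2 * (norm x)^2 / \<delta>"
            using vi by (simp add: val_def a_def x_def)
          moreover have "4 * t^2 * (norm x)^2 / \<delta> \<le> 4 * t^2 * ((norm y)^2 / \<delta>^2) / \<delta>"
            using Xb[OF HC] dpos by (intro divide_right_mono mult_left_mono) (simp_all add: x_def)
          moreover have "4 * t^2 * ((norm y)^2 / \<delta>^2) / \<delta> = t^2 * (4 * (norm y)^2 / \<delta>^3)"
            by (simp add: power_def field_simps)
          moreover have "a < m + t^2" using vH by (simp add: a_def)
          moreover have "t * (t * c) = t^2 + t^2 * (4 * (norm y)^2 / \<delta>^3)"
            by (simp add: c_def power2_eq_square algebra_simps)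
          ultimately have "t * (x \<bullet> (H' *v x) - x \<bullet> (H *v x)) \<le> t * (t * c)"
            by linarith
          then have "x \<bullet> (H' *v x) - x \<bullet> (H *v x) \<le> t * c" using t0 by simp
          moreover have "x \<bullet> (H *v x) \<le> a"
            using valq[OF HC] dpos by (simp add: a_def x_def)
          ultimately show ?thesis by linarith
        qed
        have a0: "0 \<le> a" unfolding a_def by (rule val0[OF HC])
        define \<rho> where "\<rho> = sqrt (a + t * c)"
        have rho2: "\<rho>^2 = a + t * c" unfolding \<rho>_def using a0 t0 cpos by simp
        have rhop: "\<rho> > 0" unfolding \<rho>_def using a0 t0 cpos by (simp add: add_nonneg_pos)
        have "setnorm \<H> ((1/\<rho>) *\<^sub>R x) \<le> 1"
        proof (rule S4)
          fix H' assume H'C: "H' \<in> C"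
          have "Hnorm H' ((1/\<rho>) *\<^sub>R x) = sqrt ((1/\<rho>)^2 * (x \<bullet> (H' *v x)))"
            by (simp add: Hnorm_def matrix_vector_mult_scaleR power2_eq_square)
          also have "\<dots> \<le> sqrt ((1/\<rho>)^2 * \<rho>^2)"
            using step[OF H'C] rho2 by (intro real_sqrt_le_mono mult_left_mono) simp_all
          also have "\<dots> = 1" using rhop by (simp add: power_divide)
          finally show "Hnorm H' ((1/\<rho>) *\<^sub>R x) \<le> 1" .
        qed
        then have "((1/\<rho>) *\<^sub>R x) \<bullet> y \<le> v" by (rule v_upper)
        then have "a / \<rho> \<le> v" by (simp add: a_def val_def x_def inner_commute)
        then have av: "a \<le> v * \<rho>" using rhop by (simp add: divide_le_eq)
        have "a^2 \<le> (v * \<rho>)^2" using av a0 by (intro power_mono) simp_all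
        also have "(v * \<rho>)^2 = v^2 * (a + t * c)" by (simp add: power_mult_distrib rho2)
        finally have "a * a \<le> v^2 * (a + t * c)" by (simp add: power2_eq_square)
        then have "a \<le> v^2 + v^2 * t * c / a" using am mpos by (simp add: field_simps)
        moreover have "v^2 * t * c / a \<le> v^2 * t * c / m"
          using am mpos t0 cpos by (intro divide_left_mono) simp_all
        moreover have "v^2 * t * c / m = t * (v^2 * c / m)" by simp
        ultimately show "m \<le> v^2 + t * (v^2 * c / m)" using am by linarith
      qed
    qed
    have "r^2 / (1 + dd * \<delta>) \<le> v^2" using m_ge mv by linarith
    moreover have "1 + dd * \<delta> > 0" using dd1 dpos by (simp add: add_pos_nonneg)
    ultimately show ?thesis by (simp add: divide_le_eq mult.commute)
  qed
  have "r^2 \<le> v^2"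
  proof (rule le_eps[of "dd * v^2"])
    show "0 \<le> dd * v^2" using dd1 by simp
    fix t :: real assume "0 < t" "t < 1"
    then show "r^2 \<le> v^2 + t * (dd * v^2)" using key[of t] by (simp add: algebra_simps)
  qed
  then show "r \<le> v" using v0 by (rule power2_le_imp_le)
  qed
  show ?thesis
    using eqINF v_le_r r_le_v unfolding Cp_def r_def v_def by simp
qed

end
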